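(* Let $\mathcal{C}$ be a class of languages that is closed under inverse injective alphabet morphisms (it is not assumed that $\mathcal{C}$ is closed under reversal). Then for every finitely generated group $G$ and every finite monoid generating set $A \subseteq G$: $\mathrm{wp}_A(G) \in \mathcal{C}$ if and only if $(\mathrm{wp}_A(G))^{\mathrm{rev}} \in \mathcal{C}$.
   Context: A language is a pair $(A,L)$ with $A$ a finite alphabet and $L \subseteq A^*$. An alphabet morphism is a map $h: A^* \to B^*$ ($A,B$ finite alphabets) with $h(uv) = h(u)h(v)$ for all $u,v$; it is injective if it is injective as a map. For $L \subseteq B^*$, $h^{-1}(L) = \{x \in A^* : h(x) \in L\}$. A class $\mathcal{C}$ is closed under inverse injective alphabet morphisms iff for every finite alphabet $B$, every $L \subseteq B^*$ in $\mathcal{C}$ and every injective alphabet morphism $h: A^* \to B^*$, $h^{-1}(L) \in \mathcal{C}$. A monoid generating set of $G$ is a subset $A\subseteq G$ such that every element of $G$ is a product of elements of $A$; $A$ is regarded as a finite alphabet and $\mathrm{wp}_A(G) = \{w \in A^* : w \text{ evaluates to the identity of } G\}$. $L^{\mathrm{rev}} = \{w^{\mathrm{rev}} : w \in L\}$ where $(a_1\cdots a_n)^{\mathrm{rev}} = a_n \cdots a_1$. *)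

theory Defs
  imports "HOL-Algebra.Group"
begin

text \<open>A language is a pair (A, L) with A a finite alphabet (a finite set of symbols
of type 'a) and L a set of words over A. A class of languages is a set of such pairs.\<close>

definition alph_morph :: "('a \<Rightarrow> 'b list) \<Rightarrow> 'a list \<Rightarrow> 'b list" where
  "alph_morph h w = concat (map h w)"

definition closed_inv_inj_morph :: "('a set \<times> 'a list set) set \<Rightarrow> bool" where
  "closed_inv_inj_morph C \<longleftrightarrow>
     (\<forall>A B L h. finite A \<and> finite B \<and> L \<subseteq> lists B \<and> (B, L) \<in> C \<and>
        (\<forall>a\<in>A. h a \<in> lists B) \<and> inj_on (alph_morph h) (lists A)
        \<longrightarrow> (A, {x \<in> lists A. alph_morph h x \<in> L}) \<in> C)"

definition word_eval :: "('g, 'm) monoid_scheme \<Rightarrow> 'g list \<Rightarrow> 'g" where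
  "word_eval G w = foldr (\<lambda>a b. a \<otimes>\<^bsub>G\<^esub> b) w \<one>\<^bsub>G\<^esub>"

definition monoid_gen_set :: "('g, 'm) monoid_scheme \<Rightarrow> 'g set \<Rightarrow> bool" where
  "monoid_gen_set G A \<longleftrightarrow> A \<subseteq> carrier G \<and>
     (\<forall>g\<in>carrier G. \<exists>w\<in>lists A. word_eval G w = g)"

definition word_problem :: "('g, 'm) monoid_scheme \<Rightarrow> 'g set \<Rightarrow> 'g list set" where
  "word_problem G A = {w \<in> lists A. word_eval G w = \<one>\<^bsub>G\<^esub>}"

definition lang_rev :: "'a list set \<Rightarrow> 'a list set" where
  "lang_rev L = rev ` L"

end

theory Submission
  imports Defs
begin

lemma we_append: "group G \<Longrightarrow> set u \<subseteq> carrier G \<Longrightarrow> set v \<subseteq> carrier G \<Longrightarrow>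
   word_eval G (u @ v) = word_eval G u \<otimes>\<^bsub>G\<^esub> word_eval G v"
proof (induction u)
  case Nil
  have "word_eval G v \<in> carrier G" using Nil
    unfolding word_eval_def by (induction v) (auto intro: group.subgroup_self dest: group.is_monoid monoid.m_closed)
  then show ?case using Nil by (simp add: word_eval_def group.is_monoid monoid.l_one)
next
  case (Cons a u)
  have c: "\<And>w. set w \<subseteq> carrier G \<Longrightarrow> word_eval G w \<in> carrier G"
  proof -
    fix w :: "'a list" assume "set w \<subseteq> carrier G" then show "word_eval G w \<in> carrier G"
      using Cons.prems(1) unfolding word_eval_def
      by (induction w) (auto dest: group.is_monoid monoid.m_closed monoid.one_closed)
  qed
  have "word_eval G ((a#u) @ v) = a \<otimes>\<^bsub>G\<^esub> word_eval G (u @ v)" by (simp add: word_eval_def)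
  also have "\<dots> = a \<otimes>\<^bsub>G\<^esub> (word_eval G u \<otimes>\<^bsub>G\<^esub> word_eval G v)" using Cons by simp
  also have "\<dots> = (a \<otimes>\<^bsub>G\<^esub> word_eval G u) \<otimes>\<^bsub>G\<^esub> word_eval G v"
    using Cons.prems c by (simp add: group.is_monoid monoid.m_assoc)
  finally show ?case by (simp add: word_eval_def)
qed

lemma we_closed: "group G \<Longrightarrow> set w \<subseteq> carrier G \<Longrightarrow> word_eval G w \<in> carrier G"
  unfolding word_eval_def
  by (induction w) (auto dest: group.is_monoid monoid.m_closed monoid.one_closed)

lemma we_single: "group G \<Longrightarrow> a \<in> carrier G \<Longrightarrow> word_eval G [a] = a"
  by (simp add: word_eval_def group.is_monoid monoid.r_one)

lemma we_concat_one: "group G \<Longrightarrow> set w \<subseteq> carrier G \<Longrightarrow> word_eval G w = \<one>\<^bsub>G\<^esub> \<Longrightarrow>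
   word_eval G (concat (replicate n w)) = \<one>\<^bsub>G\<^esub>"
proof (induction n)
  case 0 then show ?case by (simp add: word_eval_def)
next
  case (Suc n)
  have "set (concat (replicate n w)) \<subseteq> carrier G" using Suc.prems by auto
  then show ?case using Suc we_append[of G w "concat (replicate n w)"]
    by (simp add: group.is_monoid monoid.l_one monoid.one_closed)
qed

lemma uniform_inj:
  assumes len: "\<And>a. a \<in> A \<Longrightarrow> length (h a) = L" and L: "L > 0"
    and inj: "inj_on h A"
  shows "inj_on (alph_morph h) (lists A)"
proof -
  have "\<And>ys. xs \<in> lists A \<Longrightarrow> ys \<in> lists A \<Longrightarrow> concat (map h xs) = concat (map h ys) \<Longrightarrow> xs = ys" for xs
  proof (induction xs)
    case Nil
    then show ?case using len L by (cases ys) auto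
  next
    case (Cons x xs)
    then obtain y ys' where ys: "ys = y # ys'" using len L by (cases ys) auto
    have e: "h x @ concat (map h xs) = h y @ concat (map h ys')" using Cons.prems ys by simp
    have "h x = h y" using append_eq_append_conv[of "h x" "h y"] e len Cons.prems ys by auto
    then have "x = y" using inj Cons.prems ys by (auto dest: inj_onD)
    then show ?case using Cons e ys by auto
  qed
  then show ?thesis unfolding inj_on_def alph_morph_def by blast
qed

lemma key:
  assumes G: "group G" and AG: "A \<subseteq> carrier G"
    and hA: "\<And>a. a \<in> A \<Longrightarrow> h a \<in> lists A"
    and he: "\<And>a. a \<in> A \<Longrightarrow> word_eval G (h a) = inv\<^bsub>G\<^esub> a"
  shows "x \<in> lists A \<Longrightarrow> word_eval G (alph_morph h x) = inv\<^bsub>G\<^esub> (word_eval G (rev x))"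
proof (induction x)
  case Nil
  then show ?case using G by (simp add: alph_morph_def word_eval_def monoid.inv_one group.is_monoid group.inv_eq_1_iff)
next
  case (Cons a x)
  have a: "a \<in> carrier G" using Cons AG by auto
  have sx: "set x \<subseteq> carrier G" using Cons AG by auto
  have sh: "set (alph_morph h x) \<subseteq> carrier G" using Cons hA AG
    by (auto simp: alph_morph_def)
  have sha: "set (h a) \<subseteq> carrier G" using Cons hA AG by auto
  have "word_eval G (alph_morph h (a#x)) = word_eval G (h a) \<otimes>\<^bsub>G\<^esub> word_eval G (alph_morph h x)"
    using we_append[OF G sha sh] by (simp add: alph_morph_def)
  also have "\<dots> = inv\<^bsub>G\<^esub> a \<otimes>\<^bsub>G\<^esub> inv\<^bsub>G\<^esub> (word_eval G (rev x))" using Cons he by simp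
  also have "\<dots> = inv\<^bsub>G\<^esub> (word_eval G (rev x) \<otimes>\<^bsub>G\<^esub> a)"
    using G a we_closed[OF G, of "rev x"] sx by (simp add: group.inv_mult_group)
  also have "word_eval G (rev x) \<otimes>\<^bsub>G\<^esub> a = word_eval G (rev (a#x))"
    using we_append[OF G, of "rev x" "[a]"] sx a we_single[OF G a] by simp
  finally show ?case .
qed

theorem proposition2p7:
  fixes C :: "('g set \<times> 'g list set) set"
    and G :: "('g, 'm) monoid_scheme"
    and A :: "'g set"
  assumes "closed_inv_inj_morph C"
    and "group G"
    and "finite A"
    and "monoid_gen_set G A"
  shows "(A, word_problem G A) \<in> C \<longleftrightarrow> (A, lang_rev (word_problem G A)) \<in> C"
proof -
  note G = assms(2)
  have AG: "A \<subseteq> carrier G" using assms(4) by (simp add: monoid_gen_set_def)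
  have ex: "\<exists>w. w \<in> lists A \<and> w \<noteq> [] \<and> word_eval G w = inv\<^bsub>G\<^esub> a" if a: "a \<in> A" for a
  proof -
    have ac: "a \<in> carrier G" using a AG by auto
    then have "inv\<^bsub>G\<^esub> a \<in> carrier G" using G by (simp add: group.inv_closed)
    then obtain w where w: "w \<in> lists A" "word_eval G w = inv\<^bsub>G\<^esub> a"
      using assms(4) unfolding monoid_gen_set_def by blast
    show ?thesis
    proof (cases "w = []")
      case True
      then have "inv\<^bsub>G\<^esub> a = \<one>\<^bsub>G\<^esub>" using w by (simp add: word_eval_def)
      then have "a = \<one>\<^bsub>G\<^esub>" using G ac
        by (metis group.inv_inv monoid.inv_one group.is_monoid group.inv_eq_1_iff)
      then have "word_eval G [a] = inv\<^bsub>G\<^esub> a" using we_single[OF G ac] \<open>inv\<^bsub>G\<^esub> a = \<one>\<^bsub>G\<^esub>\<close> by simp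
      then show ?thesis using a by (intro exI[of _ "[a]"]) auto
    next
      case False then show ?thesis using w by blast
    qed
  qed
  define u where "u a = (SOME w. w \<in> lists A \<and> w \<noteq> [] \<and> word_eval G w = inv\<^bsub>G\<^esub> a)" for a
  have u: "u a \<in> lists A" "u a \<noteq> []" "word_eval G (u a) = inv\<^bsub>G\<^esub> a" if "a \<in> A" for a
    using someI_ex[OF ex[OF that]] unfolding u_def by auto
  define p where "p a = length (u a) + 1" for a
  define P where "P = (\<Prod>b\<in>A. p b)"
  define h where "h a = concat (replicate (P div p a - 1) (u a @ [a])) @ u a" for a
  have hA: "h a \<in> lists A" if "a \<in> A" for a using u[OF that] that by (auto simp: h_def split: if_splits)
  have he: "word_eval G (h a) = inv\<^bsub>G\<^esub> a" if a: "a \<in> A" for a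
  proof -
    have ac: "a \<in> carrier G" using a AG by auto
    have su: "set (u a) \<subseteq> carrier G" using u[OF a] AG by auto
    have "word_eval G (u a @ [a]) = inv\<^bsub>G\<^esub> a \<otimes>\<^bsub>G\<^esub> a"
      using we_append[OF G su, of "[a]"] ac u[OF a] we_single[OF G ac] by simp
    also have "\<dots> = \<one>\<^bsub>G\<^esub>" using G ac by (simp add: group.l_inv)
    finally have "word_eval G (concat (replicate (P div p a - 1) (u a @ [a]))) = \<one>\<^bsub>G\<^esub>"
      using we_concat_one[OF G] su ac by simp
    moreover have "set (concat (replicate (P div p a - 1) (u a @ [a]))) \<subseteq> carrier G"
      using su ac by auto
    ultimately show ?thesis unfolding h_def using we_append[OF G _ su] u[OF a] G
      by (simp add: group.inv_closed ac group.is_monoid monoid.l_one)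
  qed
  have Ppos: "P > 0" unfolding P_def p_def using assms(3) by (simp add: prod_pos)
  have hlen: "length (h a) = P - 1" if a: "a \<in> A" for a
  proof -
    have "p a dvd P" unfolding P_def using assms(3) a by (simp add: dvd_prodI)
    then obtain q where q: "P = p a * q" by blast
    have "q \<ge> 1" using Ppos q by (cases q) auto
    have "P div p a = q" using q using p_def by (metis add_gr_0 less_one nonzero_mult_div_cancel_left not_gr_zero)
    then have "length (h a) = (q - 1) * p a + length (u a)"
      by (simp add: h_def length_concat sum_list_replicate p_def)
    also have "\<dots> = q * p a - 1"
    proof -
      obtain r where "q = Suc r" using \<open>q \<ge> 1\<close> by (cases q) auto
      then show ?thesis by (simp add: p_def)
    qed
    finally show ?thesis using q by (simp add: mult.commute)
  qed
  have hinj: "inj_on h A"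
  proof (rule inj_onI)
    fix a b assume ab: "a \<in> A" "b \<in> A" "h a = h b"
    then have "inv\<^bsub>G\<^esub> a = inv\<^bsub>G\<^esub> b" using he by metis
    then show "a = b" using ab AG G by (metis group.inv_inv subsetD)
  qed
  have injgen: "inj_on (alph_morph f) (lists A)" if fl: "\<And>a. a \<in> A \<Longrightarrow> length (f a) = P - 1"
     and fi: "inj_on f A" and fn: "\<And>a. a \<in> A \<Longrightarrow> f a \<noteq> []" for f :: "'g \<Rightarrow> 'g list"
  proof (cases "A = {}")
    case True
    then have "lists A = {[]}" by (auto simp: lists_empty)
    then show ?thesis by simp
  next
    case False
    then obtain a where a: "a \<in> A" by blast
    have "P - 1 > 0" using fl[OF a] fn[OF a] by (metis length_greater_0_conv)
    then show ?thesis using uniform_inj[OF fl _ fi] by blast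
  qed
  have hne: "h a \<noteq> []" if "a \<in> A" for a using u(2)[OF that] by (simp add: h_def)
  have inj1: "inj_on (alph_morph h) (lists A)" using injgen[OF hlen hinj hne] .
  define h' where "h' a = rev (h a)" for a
  have inj2: "inj_on (alph_morph h') (lists A)"
    using injgen[of h'] hlen hne hinj by (auto simp: h'_def inj_on_def)
  have h'A: "h' a \<in> lists A" if "a \<in> A" for a using hA[OF that] by (auto simp: h'_def)
  have WPs: "word_problem G A \<subseteq> lists A" "lang_rev (word_problem G A) \<subseteq> lists A"
    by (auto simp: word_problem_def lang_rev_def)
  have ev: "word_eval G (alph_morph h x) = \<one>\<^bsub>G\<^esub> \<longleftrightarrow> word_eval G (rev x) = \<one>\<^bsub>G\<^esub>"
    if x: "x \<in> lists A" for x
  proof -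
    have "word_eval G (rev x) \<in> carrier G" using we_closed[OF G, of "rev x"] x AG by auto
    then show ?thesis using key[OF G AG hA he x] G
      by (metis group.inv_inv monoid.inv_one group.is_monoid group.inv_eq_1_iff)
  qed
  have hl: "alph_morph h x \<in> lists A" if "x \<in> lists A" for x
    using that hA by (fastforce simp: alph_morph_def)
  have E1: "{x \<in> lists A. alph_morph h x \<in> word_problem G A} = lang_rev (word_problem G A)"
  proof -
    have LR: "x \<in> lang_rev (word_problem G A) \<longleftrightarrow> x \<in> lists A \<and> word_eval G (rev x) = \<one>\<^bsub>G\<^esub>" for x
      unfolding lang_rev_def word_problem_def
      apply (auto simp: image_iff) by (metis in_listsI rev_rev_ident set_rev)
    have "x \<in> {x \<in> lists A. alph_morph h x \<in> word_problem G A} \<longleftrightarrow> x \<in> lang_rev (word_problem G A)" for x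
    proof -
      have "x \<in> {x \<in> lists A. alph_morph h x \<in> word_problem G A} \<longleftrightarrow> x \<in> lists A \<and> word_eval G (alph_morph h x) = \<one>\<^bsub>G\<^esub>"
        using hl[of x] by (auto simp: word_problem_def)
      also have "\<dots> \<longleftrightarrow> x \<in> lists A \<and> word_eval G (rev x) = \<one>\<^bsub>G\<^esub>" using ev by blast
      finally show ?thesis using LR by blast
    qed
    then show ?thesis by blast
  qed
  have am': "alph_morph h' x = rev (alph_morph h (rev x))" for x
    unfolding alph_morph_def h'_def[abs_def] by (simp add: rev_concat rev_map comp_def)
  have E2: "{x \<in> lists A. alph_morph h' x \<in> lang_rev (word_problem G A)} = word_problem G A"
  proof -
    have "alph_morph h' x \<in> lang_rev (word_problem G A) \<longleftrightarrow> x \<in> word_problem G A" if x: "x \<in> lists A" for x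
    proof -
      have rx: "rev x \<in> lists A" using x by auto
      have "alph_morph h' x \<in> lang_rev (word_problem G A) \<longleftrightarrow> rev (alph_morph h' x) \<in> word_problem G A"
        unfolding lang_rev_def by (metis image_iff rev_rev_ident)
      also have "\<dots> \<longleftrightarrow> word_eval G (alph_morph h (rev x)) = \<one>\<^bsub>G\<^esub>"
        using hl[OF rx] by (simp add: am' word_problem_def)
      also have "\<dots> \<longleftrightarrow> word_eval G x = \<one>\<^bsub>G\<^esub>" using ev[OF rx] by simp
      finally show ?thesis using x by (simp add: word_problem_def)
    qed
    then show ?thesis using WPs by auto
  qed
  have cl: "\<And>B L f. finite B \<Longrightarrow> L \<subseteq> lists B \<Longrightarrow> (B, L) \<in> C \<Longrightarrow> (\<forall>a\<in>A. f a \<in> lists B) \<Longrightarrow>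
      inj_on (alph_morph f) (lists A) \<Longrightarrow> (A, {x \<in> lists A. alph_morph f x \<in> L}) \<in> C"
    using assms(1) assms(3) unfolding closed_inv_inj_morph_def by blast
  show ?thesis
  proof
    assume "(A, word_problem G A) \<in> C"
    from cl[OF assms(3) WPs(1) this _ inj1] hA E1 show "(A, lang_rev (word_problem G A)) \<in> C" by auto
  next
    assume "(A, lang_rev (word_problem G A)) \<in> C"
    from cl[OF assms(3) WPs(2) this _ inj2] h'A E2 show "(A, word_problem G A) \<in> C" by auto
  qed
qed

end
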